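(* Let $R$ be a finite set of $n$ robots, with coordination space $\chi=\mathbb{R}^n$, obstacle region $\chi^{\mathrm{obs}}$, dynamics, brake-safe set $B_G$ and control law $g^G$ as described in the context, where $G$ is any directed graph on vertex set $R$. Then $B_G$ is positively invariant in discrete time for the system under control law $g^G$: $$\forall s\in B_G,\ \forall k\in\mathbb{N},\quad \Phi(k,s,g^G)\in B_G.$$ Moreover, the configuration remains in $\chi^{\mathrm{free}}_G$ in continuous time: $$\forall s\in B_G,\ \forall t\ge 0,\quad \pi_x(\Phi(t,s,g^G))\in \chi^{\mathrm{free}}_G.$$
   Context: Robots $i\in R$ move along fixed paths; $x_i\in\mathbb{R}$ is the curvilinear coordinate of robot $i$, $x=(x_i)_{i\in R}\in\chi:=\mathbb{R}^n$, and $\{\mathbf e_i\}$ is the canonical basis of $\chi$. For each unordered pair $\{i,j\}$, $\chi^{\mathrm{obs}}_{ij}\subset\chi$ (configurations where $i$ and $j$ collide) is an open cylinder of the form $C_{ij}+\mathrm{span}\{\mathbf e_k:k\ne i,j\}$ where $C_{ij}$ is an open bounded convex subset of $\mathrm{span}\{\mathbf e_i,\mathbf e_j\}$ (possibly empty); $\chi^{\mathrm{obs}}=\bigcup_{\{i,j\}}\chi^{\mathrm{obs}}_{ij}$. For $i\neq j$ define $\chi^{\mathrm{obs}}_{i\succ j}:=\chi^{\mathrm{obs}}_{ij}-\mathbb{R}_+\mathbf e_i+\mathbb{R}_+\mathbf e_j$ (Minkowski sum). A priority graph is a directed graph $G$ with vertex set $R$ and edge set $E(G)$; an edge $(i,j)$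 means $i$ has priority over $j$. Set $\chi^{\mathrm{obs}}_G:=\bigcup_{(i,j)\in E(G)}\chi^{\mathrm{obs}}_{i\succ j}$, $\chi^{\mathrm{free}}_{i\succ j}:=\chi\setminus\chi^{\mathrm{obs}}_{i\succ j}$, $\chi^{\mathrm{free}}_G:=\chi\setminus\chi^{\mathrm{obs}}_G$. Dynamics: robot $i$ has state $s_i=(x_i,v_i)\in S_i:=\mathbb{R}\times[0,\overline v_i]$ with speed limit $\overline v_i\ge 0$, and $\dot x_i=v_i$, $\dot v_i=\mathbf u_i(t)\,\delta(\mathbf u_i(t),v_i(t))$, where $\delta(u,v)=0$ if ($v=0$ and $u<0$) or ($v=\overline v_i$ and $u>0$), and $\delta=1$ otherwise. Controls take values in $U_i=[\underline u_i,\overline u_i]$ with $\underline u_i<0<\overline u_i$ and are piecewise constant on each slot $[k,k+1)$, $k\in\mathbb{N}$; $\mathbf U_i$ is the set of such controls, $\mathbf U=\prod_i\mathbf U_i$, $S=\prod_i S_i$, $U=\prod_i U_i$. $\Phi_i(t,s_i,\mathbf u_i)$ is the resulting flow of robot $i$ from $s_i$, and $\Phi(t,s,\mathbf u)=(\Phi_i(t,s_i,\mathbf u_i))_i$. $\underline{\mathbf u}$ denotes the constant control equal to $(\underline u_i)_i$. $\pi_x(s)=x$ and $\pi_{x,i}(s)=x_i$. Brake-safe states: $B_G:=\{s\in S:\ \pi_x(\Phi(t,s,\underline{\mathbf u}))\in\chi^{\mathrm{free}}_G\ \forall t\ge0\}$. Impulse control: $\mathbf u_i^{\mathrm{impulse}}(t)=\overline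 u_i$ for $t\in[0,1)$ and $=\underline u_i$ for $t\ge1$. Worst-case control w.r.t. $i$: $\tilde{\mathbf u}^i$ with $\tilde{\mathbf u}^i_i=\mathbf u_i^{\mathrm{impulse}}$ and $\tilde{\mathbf u}^i_j=\underline{\mathbf u}_j$ (constant $\underline u_j$) for $j\ne i$. Control law $g^G:S\to U$: $g^G_i(s)=\underline u_i$ if there exists $(j,i)\in E(G)$ and $t\ge0$ with $\pi_x(\Phi(t,s,\tilde{\mathbf u}^i))\in\chi^{\mathrm{obs}}_{j\succ i}$; otherwise $g^G_i(s)=\overline u_i$. For a feedback law $h:S\to U$, $\Phi(t,s,h)$ denotes $\Phi(t,s,\mathbf u)$ where $\mathbf u\in\mathbf U$ satisfies $\mathbf u(k)=h(\Phi(k,s,\mathbf u))$ for all $k\in\mathbb{N}$. *)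

theory Defs
  imports "HOL-Analysis.Analysis"
begin

text \<open>Robots are the elements of a finite type 'r (R = UNIV). A configuration is
  x :: 'r => real; a state is s :: 'r => real * real, s i = (x_i, v_i).\<close>

type_synonym 'r config = "'r \<Rightarrow> real"
type_synonym 'r state = "'r \<Rightarrow> real \<times> real"
type_synonym 'r control = "nat \<Rightarrow> 'r \<Rightarrow> real"  \<comment> \<open>value of the control on slot [k,k+1)\<close>

definition unit_vec :: "'r \<Rightarrow> 'r config" where
  "unit_vec i = (\<lambda>k. if k = i then 1 else 0)"

definition obs_pair :: "('r \<Rightarrow> 'r \<Rightarrow> (real \<times> real) set) \<Rightarrow> 'r \<Rightarrow> 'r \<Rightarrow> 'r config set" where
  "obs_pair C i j = (if i = j then {} else {x. (x i, x j) \<in> C i j})"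

definition obs_all :: "('r \<Rightarrow> 'r \<Rightarrow> (real \<times> real) set) \<Rightarrow> 'r config set" where
  "obs_all C = (\<Union>i. \<Union>j. obs_pair C i j)"

definition obs_prio :: "('r \<Rightarrow> 'r \<Rightarrow> (real \<times> real) set) \<Rightarrow> 'r \<Rightarrow> 'r \<Rightarrow> 'r config set" where
  "obs_prio C i j = {y. \<exists>x \<in> obs_pair C i j. \<exists>a b. a \<ge> 0 \<and> b \<ge> 0 \<and>
        y = (\<lambda>k. x k - a * unit_vec i k + b * unit_vec j k)}"

definition obs_G :: "('r \<Rightarrow> 'r \<Rightarrow> (real \<times> real) set) \<Rightarrow> ('r \<times> 'r) set \<Rightarrow> 'r config set" where
  "obs_G C E = (\<Union>(i, j) \<in> E. obs_prio C i j)"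

definition free_G :: "('r \<Rightarrow> 'r \<Rightarrow> (real \<times> real) set) \<Rightarrow> ('r \<times> 'r) set \<Rightarrow> 'r config set" where
  "free_G C E = UNIV - obs_G C E"

text \<open>Dynamics of one robot on one slot with constant control u, starting from
  (x0,v0) with 0 <= v0 <= vb: the velocity follows v' = u until it hits 0 or vb,
  where it stays (this is the solution of v' = u * delta(u,v)); x' = v.\<close>
definition sat :: "real \<Rightarrow> real \<Rightarrow> real" where
  "sat vb v = max 0 (min vb v)"

definition slot_flow :: "real \<Rightarrow> real \<times> real \<Rightarrow> real \<Rightarrow> real \<Rightarrow> real \<times> real" where
  "slot_flow vb s0 u \<tau> =
     (fst s0 + integral {0..\<tau>} (\<lambda>\<sigma>. sat vb (snd s0 + u * \<sigma>)), sat vb (snd s0 + u * \<tau>))"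

fun state_at :: "('r \<Rightarrow> real) \<Rightarrow> 'r state \<Rightarrow> 'r control \<Rightarrow> nat \<Rightarrow> 'r state" where
  "state_at vb s u 0 = s"
| "state_at vb s u (Suc k) = (\<lambda>i. slot_flow (vb i) (state_at vb s u k i) (u k i) 1)"

definition Phi :: "('r \<Rightarrow> real) \<Rightarrow> real \<Rightarrow> 'r state \<Rightarrow> 'r control \<Rightarrow> 'r state" where
  "Phi vb t s u = (let k = nat \<lfloor>t\<rfloor> in
      (\<lambda>i. slot_flow (vb i) (state_at vb s u k i) (u k i) (t - real k)))"

definition pos :: "'r state \<Rightarrow> 'r config" where
  "pos s = (\<lambda>i. fst (s i))"

definition states :: "('r \<Rightarrow> real) \<Rightarrow> 'r state set" where
  "states vb = {s. \<forall>i. 0 \<le> snd (s i) \<and> snd (s i) \<le> vb i}"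

definition brake_ctrl :: "('r \<Rightarrow> real) \<Rightarrow> 'r control" where
  "brake_ctrl ulo = (\<lambda>k i. ulo i)"

definition worst_ctrl :: "('r \<Rightarrow> real) \<Rightarrow> ('r \<Rightarrow> real) \<Rightarrow> 'r \<Rightarrow> 'r control" where
  "worst_ctrl ulo uhi i = (\<lambda>k j. if j = i \<and> k = 0 then uhi j else ulo j)"

definition brake_safe ::
  "('r \<Rightarrow> 'r \<Rightarrow> (real \<times> real) set) \<Rightarrow> ('r \<times> 'r) set \<Rightarrow> ('r \<Rightarrow> real) \<Rightarrow> ('r \<Rightarrow> real) \<Rightarrow> 'r state set" where
  "brake_safe C E vb ulo =
     {s \<in> states vb. \<forall>t \<ge> 0. pos (Phi vb t s (brake_ctrl ulo)) \<in> free_G C E}"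

definition ctrl_law ::
  "('r \<Rightarrow> 'r \<Rightarrow> (real \<times> real) set) \<Rightarrow> ('r \<times> 'r) set \<Rightarrow> ('r \<Rightarrow> real) \<Rightarrow> ('r \<Rightarrow> real) \<Rightarrow> ('r \<Rightarrow> real)
     \<Rightarrow> 'r state \<Rightarrow> 'r \<Rightarrow> real" where
  "ctrl_law C E vb ulo uhi s i =
     (if \<exists>j. (j, i) \<in> E \<and> (\<exists>t \<ge> 0. pos (Phi vb t s (worst_ctrl ulo uhi i)) \<in> obs_prio C j i)
      then ulo i else uhi i)"

end

theory Submission
  imports Defs
begin

fun st1 :: "real \<Rightarrow> real \<times> real \<Rightarrow> (nat \<Rightarrow> real) \<Rightarrow> nat \<Rightarrow> real \<times> real" where
  "st1 vb s0 a 0 = s0"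
| "st1 vb s0 a (Suc k) = slot_flow vb (st1 vb s0 a k) (a k) 1"

definition ph1 :: "real \<Rightarrow> real \<Rightarrow> real \<times> real \<Rightarrow> (nat \<Rightarrow> real) \<Rightarrow> real \<times> real" where
  "ph1 vb t s0 a = (let k = nat \<lfloor>t\<rfloor> in slot_flow vb (st1 vb s0 a k) (a k) (t - real k))"

lemma state_at_eq: "state_at vb s u k i = st1 (vb i) (s i) (\<lambda>k. u k i) k"
  by (induction k) auto

lemma Phi_eq: "Phi vb t s u i = ph1 (vb i) t (s i) (\<lambda>k. u k i)"
  by (simp add: Phi_def ph1_def Let_def state_at_eq)

lemma sat_mono: "v' \<le> v \<Longrightarrow> sat vb v' \<le> sat vb v"
  by (simp add: sat_def)

lemma mono_slot:
  assumes "b \<le> a" "0 \<le> \<tau>" "fst s' \<le> fst s" "snd s' \<le> snd s"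
  shows "fst (slot_flow vb s' b \<tau>) \<le> fst (slot_flow vb s a \<tau>) \<and>
         snd (slot_flow vb s' b \<tau>) \<le> snd (slot_flow vb s a \<tau>)"
proof -
  have le: "\<And>\<sigma>. 0 \<le> \<sigma> \<Longrightarrow> snd s' + b * \<sigma> \<le> snd s + a * \<sigma>"
    using assms by (smt (verit) mult_right_mono)
  have c: "\<And>v c. continuous_on {0..\<tau>} (\<lambda>\<sigma>. sat vb (v + c * \<sigma>))"
    unfolding sat_def by (intro continuous_intros)
  have "integral {0..\<tau>} (\<lambda>\<sigma>. sat vb (snd s' + b * \<sigma>)) \<le> integral {0..\<tau>} (\<lambda>\<sigma>. sat vb (snd s + a * \<sigma>))"
    by (rule integral_le) (auto intro!: integrable_continuous_interval c sat_mono le)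
  then show ?thesis using assms le[of \<tau>] sat_mono unfolding slot_flow_def by auto
qed

lemma mono_st1:
  assumes "\<And>k. b k \<le> a k"
  shows "fst (st1 vb s0 b k) \<le> fst (st1 vb s0 a k) \<and> snd (st1 vb s0 b k) \<le> snd (st1 vb s0 a k)"
proof (induction k)
  case (Suc k)
  then show ?case using mono_slot[OF assms[of k], of 1] by simp
qed simp

lemma mono_ph1:
  assumes "\<And>k. b k \<le> a k" "0 \<le> t"
  shows "fst (ph1 vb t s0 b) \<le> fst (ph1 vb t s0 a)"
proof -
  have "real (nat \<lfloor>t\<rfloor>) \<le> t" using assms(2) by linarith
  then show ?thesis unfolding ph1_def Let_def
    using mono_slot mono_st1 assms by (metis diff_ge_0_iff_ge)
qed

lemma st1_shift: "st1 vb s0 a (Suc m) = st1 vb (slot_flow vb s0 (a 0) 1) (\<lambda>k. a (Suc k)) m"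
  by (induction m) auto

lemma ph1_shift:
  assumes "0 \<le> t"
  shows "ph1 vb (t + 1) s0 a = ph1 vb t (slot_flow vb s0 (a 0) 1) (\<lambda>k. a (Suc k))"
proof -
  have "nat \<lfloor>t + 1\<rfloor> = Suc (nat \<lfloor>t\<rfloor>)" using assms by linarith
  then show ?thesis unfolding ph1_def Let_def using st1_shift[of vb s0 a "nat \<lfloor>t\<rfloor>"] by simp
qed

lemma ph1_small:
  assumes "0 \<le> t" "t < 1"
  shows "ph1 vb t s0 a = slot_flow vb s0 (a 0) t"
proof -
  have "nat \<lfloor>t\<rfloor> = 0" using assms by linarith
  then show ?thesis unfolding ph1_def by simp
qed

lemma slot_flow_0: "0 \<le> snd s0 \<Longrightarrow> snd s0 \<le> vb \<Longrightarrow> slot_flow vb s0 u 0 = s0"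
  unfolding slot_flow_def sat_def by (simp add: prod_eq_iff)

lemma slot_flow_range: "0 \<le> vb \<Longrightarrow> 0 \<le> snd (slot_flow vb s0 u t) \<and> snd (slot_flow vb s0 u t) \<le> vb"
  unfolding slot_flow_def sat_def by auto

lemma obs_prio_mono:
  assumes "y \<in> obs_prio C j i" "y i \<le> z i" "z j \<le> y j"
  shows "z \<in> obs_prio C j i"
proof -
  from assms(1) obtain x a b where x: "x \<in> obs_pair C j i" "a \<ge> 0" "b \<ge> 0"
    and y: "y = (\<lambda>k. x k - a * unit_vec j k + b * unit_vec i k)"
    unfolding obs_prio_def by blast
  have ji: "j \<noteq> i" using x(1) unfolding obs_pair_def by (auto split: if_splits)
  define x' where "x' = (\<lambda>k. if k = i then x i else if k = j then x j else z k)"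
  have "x' \<in> obs_pair C j i" using x(1) ji unfolding obs_pair_def x'_def by auto
  moreover have "a + (y j - z j) \<ge> 0" "b + (z i - y i) \<ge> 0" using assms x by auto
  moreover have "z = (\<lambda>k. x' k - (a + (y j - z j)) * unit_vec j k + (b + (z i - y i)) * unit_vec i k)"
    using ji by (auto simp: y x'_def unit_vec_def)
  ultimately show ?thesis unfolding obs_prio_def by blast
qed

lemma ctrl_law_cases: "ctrl_law C E vb ulo uhi s i = ulo i \<or> ctrl_law C E vb ulo uhi s i = uhi i"
  unfolding ctrl_law_def by auto

lemma obs_prio_self: "obs_prio C i i = {}"
  unfolding obs_prio_def obs_pair_def by auto

lemma step:
  assumes sB: "s' \<in> brake_safe C E vb ulo" and lt: "\<And>i. ulo i < uhi i" and t: "0 \<le> t"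
  shows "pos (Phi vb t s' (\<lambda>k i. if k = 0 then ctrl_law C E vb ulo uhi s' i else ulo i)) \<in> free_G C E"
proof (rule ccontr)
  define v where "v = (\<lambda>(k::nat) i. if k = 0 then ctrl_law C E vb ulo uhi s' i else ulo i)"
  define y where "y = pos (Phi vb t s' v)"
  assume "pos (Phi vb t s' (\<lambda>k i. if k = 0 then ctrl_law C E vb ulo uhi s' i else ulo i)) \<notin> free_G C E"
  then have "y \<in> obs_G C E" unfolding y_def v_def free_G_def by auto
  then obtain j i where E: "(j, i) \<in> E" and yo: "y \<in> obs_prio C j i"
    unfolding obs_G_def by auto
  have ji: "j \<noteq> i" proof assume "j = i" then show False using yo obs_prio_self[of C i] by simp qed
  have vge: "\<And>k l. ulo l \<le> v k l"
  proof -
    fix k l show "ulo l \<le> v k l" unfolding v_def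
      using ctrl_law_cases[of C E vb ulo uhi s' l] lt[of l] by auto
  qed
  show False
  proof (cases "ctrl_law C E vb ulo uhi s' i = ulo i")
    case True
    define z where "z = pos (Phi vb t s' (brake_ctrl ulo))"
    have "(\<lambda>k. v k i) = (\<lambda>k. brake_ctrl ulo k i)" using True unfolding v_def brake_ctrl_def by auto
    then have "z i = y i" unfolding z_def y_def pos_def Phi_eq by simp
    moreover have "z j \<le> y j" unfolding z_def y_def pos_def Phi_eq
      by (rule mono_ph1) (auto simp: brake_ctrl_def vge t)
    ultimately have "z \<in> obs_prio C j i" using obs_prio_mono[OF yo] by simp
    then have "z \<in> obs_G C E" using E unfolding obs_G_def by auto
    then show False using sB t unfolding brake_safe_def free_G_def z_def by auto
  next
    case False
    then have hi: "ctrl_law C E vb ulo uhi s' i = uhi i" using ctrl_law_cases by metis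
    have cond: "\<not> (\<exists>j. (j, i) \<in> E \<and> (\<exists>t \<ge> 0. pos (Phi vb t s' (worst_ctrl ulo uhi i)) \<in> obs_prio C j i))"
      using hi lt[of i] unfolding ctrl_law_def by (auto split: if_splits)
    define z where "z = pos (Phi vb t s' (worst_ctrl ulo uhi i))"
    have "(\<lambda>k. v k i) = (\<lambda>k. worst_ctrl ulo uhi i k i)" using hi unfolding v_def worst_ctrl_def by auto
    then have "z i = y i" unfolding z_def y_def pos_def Phi_eq by simp
    moreover have "z j \<le> y j" unfolding z_def y_def pos_def Phi_eq
      by (rule mono_ph1) (auto simp: worst_ctrl_def vge t ji)
    ultimately have "z \<in> obs_prio C j i" using obs_prio_mono[OF yo] by simp
    then show False using cond E t unfolding z_def by auto
  qed
qed

theorem theorem1: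
  fixes C :: "'r::finite \<Rightarrow> 'r \<Rightarrow> (real \<times> real) set"
    and E :: "('r \<times> 'r) set"
    and vb ulo uhi :: "'r \<Rightarrow> real"
  assumes C_open: "\<And>i j. i \<noteq> j \<Longrightarrow> open (C i j)"
    and C_bounded: "\<And>i j. i \<noteq> j \<Longrightarrow> bounded (C i j)"
    and C_convex: "\<And>i j. i \<noteq> j \<Longrightarrow> convex (C i j)"
    and C_sym: "\<And>i j. i \<noteq> j \<Longrightarrow> C j i = prod.swap ` C i j"
    and vb_nonneg: "\<And>i. 0 \<le> vb i"
    and ulo_neg: "\<And>i. ulo i < 0"
    and uhi_pos: "\<And>i. 0 < uhi i"
  shows "\<forall>s \<in> brake_safe C E vb ulo. \<forall>u :: 'r control.
           (\<forall>k. u k = ctrl_law C E vb ulo uhi (Phi vb (real k) s u)) \<longrightarrow>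
           (\<forall>k :: nat. Phi vb (real k) s u \<in> brake_safe C E vb ulo) \<and>
           (\<forall>t \<ge> 0. pos (Phi vb t s u) \<in> free_G C E)"
proof (intro ballI allI impI)
  fix s u
  assume sB: "s \<in> brake_safe C E vb ulo"
    and hu: "\<forall>k. u k = ctrl_law C E vb ulo uhi (Phi vb (real k) s u)"
  have lt: "\<And>i. ulo i < uhi i" using ulo_neg uhi_pos by (smt (verit))
  have rng: "0 \<le> snd (state_at vb s u k i) \<and> snd (state_at vb s u k i) \<le> vb i" for k i
  proof (cases k)
    case 0 then show ?thesis using sB unfolding brake_safe_def states_def by auto
  next
    case (Suc m) then show ?thesis using slot_flow_range[OF vb_nonneg[of i]] by simp
  qed
  have PS: "Phi vb (real k) s u = state_at vb s u k" for k
    unfolding Phi_def by (auto simp: slot_flow_0 rng)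
  have hu': "u k = ctrl_law C E vb ulo uhi (state_at vb s u k)" for k using hu PS by simp
  define v where "v k = (\<lambda>(m::nat) i. if m = 0 then ctrl_law C E vb ulo uhi (state_at vb s u k) i else ulo i)" for k
  have shift: "Phi vb t (state_at vb s u (Suc k)) (brake_ctrl ulo) = Phi vb (t + 1) (state_at vb s u k) (v k)"
    if t: "0 \<le> t" for t k
  proof
    fix i
    show "Phi vb t (state_at vb s u (Suc k)) (brake_ctrl ulo) i = Phi vb (t + 1) (state_at vb s u k) (v k) i"
      unfolding Phi_eq ph1_shift[OF t] by (simp add: v_def brake_ctrl_def hu')
  qed
  have B: "state_at vb s u k \<in> brake_safe C E vb ulo" for k
  proof (induction k)
    case 0 then show ?case using sB by simp
  next
    case (Suc k)
    have "state_at vb s u (Suc k) \<in> states vb" unfolding states_def using rng by blast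
    moreover have "pos (Phi vb t (state_at vb s u (Suc k)) (brake_ctrl ulo)) \<in> free_G C E"
      if "t \<ge> 0" for t
      unfolding shift[OF that] v_def using step[OF Suc lt, of "t + 1"] that by simp
    ultimately show ?case unfolding brake_safe_def by blast
  qed
  have G1: "\<forall>k :: nat. Phi vb (real k) s u \<in> brake_safe C E vb ulo" using B PS by simp
  have G2: "\<forall>t \<ge> 0. pos (Phi vb t s u) \<in> free_G C E"
  proof (intro allI impI)
    fix t :: real assume t: "0 \<le> t"
    define k where "k = nat \<lfloor>t\<rfloor>"
    have t1: "0 \<le> t - real k" "t - real k < 1" unfolding k_def using t by linarith+
    have "Phi vb t s u = Phi vb (t - real k) (state_at vb s u k) (v k)"
    proof
      fix i
      have "Phi vb t s u i = slot_flow (vb i) (state_at vb s u k i) (u k i) (t - real k)"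
        by (simp add: Phi_def k_def Let_def)
      then show "Phi vb t s u i = Phi vb (t - real k) (state_at vb s u k) (v k) i"
        unfolding Phi_eq ph1_small[OF t1] by (simp add: v_def hu'[of k])
    qed
    then show "pos (Phi vb t s u) \<in> free_G C E"
      using step[OF B lt t1(1)] unfolding v_def by simp
  qed
  show "(\<forall>k :: nat. Phi vb (real k) s u \<in> brake_safe C E vb ulo) \<and> (\<forall>t \<ge> 0. pos (Phi vb t s u) \<in> free_G C E)"
    using G1 G2 by blast
qed

end
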